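(* Let $\mathcal I$ be a chore allocation instance with two agents $N=\{1,2\}$, labelled so that $s_1\le s_2$, and let $\langle X_1,X_2\rangle$ be the output of Algorithm $\mathsf{DivCho}$ on $\mathcal I$. Then for each $i\in\{1,2\}$, $V_i(X_i)\ge\frac32\mathsf{WMMS}_i(\mathcal I)\ge\frac32\mathsf{OWMMS}_i(\mathcal I)$.
   Context: A chore allocation instance: agents $N$, chores $M$, additive valuations $V_i$ with $V_i(\{j\})\le0$ and $V_i(M)=-1$, shares $s_i\in(0,1]$ with $\sum_is_i=1$. An allocation is an ordered partition of $M$ into $|N|$ possibly empty bundles. $\mathsf{WMMS}_i(\mathcal I):=\max_{\langle Y_1,\dots,Y_n\rangle}\min_{k\in N}V_i(Y_k)\frac{s_i}{s_k}$ over all allocations; a partition attaining this maximum is a P-$i$ partition. The OWMMS ratio $\alpha^*$ is the minimal $\alpha\ge1$ such that some allocation has $V_i(X_i)\ge\alpha\,\mathsf{WMMS}_i(\mathcal I)$ for all $i$, and $\mathsf{OWMMS}_i(\mathcal I):=\alpha^*\mathsf{WMMS}_i(\mathcal I)$. Algorithm $\mathsf{DivCho}$ (with $s_1\le s_2$): if $s_1\le\frac13$ and $s_2\ge\frac23$, output $X_1=\emptyset$, $X_2=M$. Otherwise, agent 2 partitions $M$ into $\langle A_1,A_2\rangle$ according to a P-2 partition; agent 1 chooses the bundle among $A_1,A_2$ of highest value $V_1$, which becomes $X_1$, and the other bundle becomes $X_2$. *)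

theory Defs
  imports Main "HOL.Real"
begin

definition Val :: "('a \<Rightarrow> 'c \<Rightarrow> real) \<Rightarrow> 'a \<Rightarrow> 'c set \<Rightarrow> real" where
  "Val v i S = (\<Sum>j\<in>S. v i j)"

definition chore_instance ::
  "'a set \<Rightarrow> 'c set \<Rightarrow> ('a \<Rightarrow> 'c \<Rightarrow> real) \<Rightarrow> ('a \<Rightarrow> real) \<Rightarrow> bool" where
  "chore_instance N M v s \<longleftrightarrow>
     finite N \<and> N \<noteq> {} \<and> finite M \<and>
     (\<forall>i\<in>N. \<forall>j\<in>M. v i j \<le> 0) \<and>
     (\<forall>i\<in>N. Val v i M = -1) \<and>
     (\<forall>i\<in>N. 0 < s i \<and> s i \<le> 1) \<and>
     (\<Sum>i\<in>N. s i) = 1"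

definition allocations :: "'a set \<Rightarrow> 'c set \<Rightarrow> ('a \<Rightarrow> 'c set) set" where
  "allocations N M =
     {Y. (\<forall>k\<in>N. \<forall>l\<in>N. k \<noteq> l \<longrightarrow> Y k \<inter> Y l = {}) \<and>
         (\<Union>k\<in>N. Y k) = M \<and> (\<forall>k. k \<notin> N \<longrightarrow> Y k = {})}"

definition wval ::
  "'a set \<Rightarrow> ('a \<Rightarrow> 'c \<Rightarrow> real) \<Rightarrow> ('a \<Rightarrow> real) \<Rightarrow> 'a \<Rightarrow> ('a \<Rightarrow> 'c set) \<Rightarrow> real" where
  "wval N v s i Y = Min ((\<lambda>k. Val v i (Y k) * (s i / s k)) ` N)"

definition WMMS ::
  "'a set \<Rightarrow> 'c set \<Rightarrow> ('a \<Rightarrow> 'c \<Rightarrow> real) \<Rightarrow> ('a \<Rightarrow> real) \<Rightarrow> 'a \<Rightarrow> real" where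
  "WMMS N M v s i = Max (wval N v s i ` allocations N M)"

definition P_partition ::
  "'a set \<Rightarrow> 'c set \<Rightarrow> ('a \<Rightarrow> 'c \<Rightarrow> real) \<Rightarrow> ('a \<Rightarrow> real) \<Rightarrow> 'a \<Rightarrow> ('a \<Rightarrow> 'c set) \<Rightarrow> bool" where
  "P_partition N M v s i Y \<longleftrightarrow> Y \<in> allocations N M \<and> wval N v s i Y = WMMS N M v s i"

definition OWMMS_ratio ::
  "'a set \<Rightarrow> 'c set \<Rightarrow> ('a \<Rightarrow> 'c \<Rightarrow> real) \<Rightarrow> ('a \<Rightarrow> real) \<Rightarrow> real" where
  "OWMMS_ratio N M v s =
     Inf {\<alpha>. 1 \<le> \<alpha> \<and> (\<exists>X\<in>allocations N M. \<forall>i\<in>N. Val v i (X i) \<ge> \<alpha> * WMMS N M v s i)}"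

definition OWMMS ::
  "'a set \<Rightarrow> 'c set \<Rightarrow> ('a \<Rightarrow> 'c \<Rightarrow> real) \<Rightarrow> ('a \<Rightarrow> real) \<Rightarrow> 'a \<Rightarrow> real" where
  "OWMMS N M v s i = OWMMS_ratio N M v s * WMMS N M v s i"

text \<open>Algorithm DivCho for agents 1 and 2 (with s 1 \<le> s 2). The algorithm is
nondeterministic (choice of P-2 partition, tie-breaking of agent 1), so we describe
the set of its possible outputs X1, X2.\<close>

definition DivCho_output ::
  "'c set \<Rightarrow> (nat \<Rightarrow> 'c \<Rightarrow> real) \<Rightarrow> (nat \<Rightarrow> real) \<Rightarrow> 'c set \<Rightarrow> 'c set \<Rightarrow> bool" where
  "DivCho_output M v s X1 X2 \<longleftrightarrow>
     (if s 1 \<le> 1/3 \<and> s 2 \<ge> 2/3 then X1 = {} \<and> X2 = M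
      else (\<exists>A. P_partition {1,2} M v s 2 A \<and>
              ((X1 = A 1 \<and> X2 = A 2 \<and> Val v 1 (A 1) \<ge> Val v 1 (A 2)) \<or>
               (X1 = A 2 \<and> X2 = A 1 \<and> Val v 1 (A 2) \<ge> Val v 1 (A 1)))))"

end

theory Submission
  imports Defs
begin

lemma fin_alloc:
  assumes "finite M"
  shows "finite (allocations {1::nat,2} M)"
proof -
  have inj: "inj_on (\<lambda>Y. (Y 1, Y 2)) (allocations {1::nat,2} M)"
  proof (rule inj_onI)
    fix X Y assume X: "X \<in> allocations {1::nat,2} M" and Y: "Y \<in> allocations {1::nat,2} M"
      and e: "(X 1, X 2) = (Y 1, Y 2)"
    show "X = Y"
    proof
      fix k :: nat
      show "X k = Y k" using X Y e unfolding allocations_def by (cases "k = 1"; cases "k = 2") auto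
    qed
  qed
  have "(\<lambda>Y. (Y 1, Y 2)) ` (allocations {1::nat,2} M) \<subseteq> Pow M \<times> Pow M"
    unfolding allocations_def by auto
  then have "finite ((\<lambda>Y. (Y 1, Y 2)) ` (allocations {1::nat,2} M))"
    using assms by (meson finite_Pow_iff finite_SigmaI finite_subset)
  then show ?thesis using finite_imageD inj by blast
qed

lemma alloc_parts:
  assumes "Y \<in> allocations {1::nat,2} M"
  shows "Y 1 \<inter> Y 2 = {}" "Y 1 \<union> Y 2 = M"
  using assms unfolding allocations_def by auto

lemma alloc_sum:
  assumes "finite M" "Y \<in> allocations {1::nat,2} M"
  shows "Val v i (Y 1) + Val v i (Y 2) = Val v i M"
proof -
  have d: "Y 1 \<inter> Y 2 = {}" and u: "Y 1 \<union> Y 2 = M" using alloc_parts[OF assms(2)] by auto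
  have f1: "finite (Y 1)" "finite (Y 2)" using u assms(1) by (metis finite_Un)+
  show ?thesis unfolding Val_def using sum.union_disjoint[OF f1 d, of "v i"] u by simp
qed

lemma val_nonpos:
  assumes "\<forall>j\<in>M. v i j \<le> 0" "S \<subseteq> M"
  shows "Val v i S \<le> 0"
  unfolding Val_def using assms by (meson subsetD sum_nonpos)

lemma wval2:
  "wval {1::nat,2} v s i Y = min (Val v i (Y 1) * (s i / s 1)) (Val v i (Y 2) * (s i / s 2))"
  unfolding wval_def by simp

lemma alloc_ne: "(\<lambda>k. if k = (1::nat) then M else {}) \<in> allocations {1,2} M"
  unfolding allocations_def by auto

lemma WMMS_ge:
  assumes "finite M" "Y \<in> allocations {1::nat,2} M"
  shows "wval {1,2} v s i Y \<le> WMMS {1,2} M v s i"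
  unfolding WMMS_def using fin_alloc[OF assms(1)] assms(2) by (intro Max_ge) auto

lemma WMMS_att:
  assumes "finite M"
  shows "\<exists>Y\<in>allocations {1::nat,2} M. WMMS {1,2} M v s i = wval {1,2} v s i Y"
proof -
  have "WMMS {1,2} M v s i \<in> wval {1,2} v s i ` allocations {1::nat,2} M"
    unfolding WMMS_def using fin_alloc[OF assms(1)] alloc_ne by (intro Max_in) auto
  then show ?thesis by auto
qed

lemma WMMS_le:
  assumes "finite M" "\<And>Y. Y \<in> allocations {1::nat,2} M \<Longrightarrow> wval {1,2} v s i Y \<le> c"
  shows "WMMS {1,2} M v s i \<le> c"
  using WMMS_att[OF assms(1), of v s i] assms(2) by auto

theorem theorem2:
  fixes M :: "'c set" and v :: "nat \<Rightarrow> 'c \<Rightarrow> real" and s :: "nat \<Rightarrow> real"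
    and X1 X2 :: "'c set"
  assumes "chore_instance {1,2} M v s"
    and "s 1 \<le> s 2"
    and "DivCho_output M v s X1 X2"
  shows "Val v 1 X1 \<ge> 3/2 * WMMS {1,2} M v s 1
       \<and> 3/2 * WMMS {1,2} M v s 1 \<ge> 3/2 * OWMMS {1,2} M v s 1
       \<and> Val v 2 X2 \<ge> 3/2 * WMMS {1,2} M v s 2
       \<and> 3/2 * WMMS {1,2} M v s 2 \<ge> 3/2 * OWMMS {1,2} M v s 2"
proof -
  note ci = assms(1)[unfolded chore_instance_def]
  have fM: "finite M" using ci by blast
  have np1: "\<forall>j\<in>M. v 1 j \<le> 0" and np2: "\<forall>j\<in>M. v 2 j \<le> 0" using ci by auto
  have VM1: "Val v 1 M = -1" and VM2: "Val v 2 M = -1" using ci by auto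
  have s1: "0 < s 1" and s2: "0 < s 2" using ci by auto
  have ssum: "s 1 + s 2 = 1" using ci by simp
  define W1 where "W1 = WMMS {1,2} M v s 1"
  define W2 where "W2 = WMMS {1,2} M v s 2"
  have W1np: "W1 \<le> 0"
    unfolding W1_def
  proof (rule WMMS_le[OF fM])
    fix Y assume Y: "Y \<in> allocations {1::nat,2} M"
    have "Val v 1 (Y 1) \<le> 0" using val_nonpos[of M v 1, OF np1] alloc_parts[OF Y] by blast
    then show "wval {1,2} v s 1 Y \<le> 0" unfolding wval2 using s1 by simp
  qed
  have W2np: "W2 \<le> 0"
    unfolding W2_def
  proof (rule WMMS_le[OF fM])
    fix Y assume Y: "Y \<in> allocations {1::nat,2} M"
    have "Val v 2 (Y 2) \<le> 0" using val_nonpos[of M v 2, OF np2] alloc_parts[OF Y] by blast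
    then show "wval {1,2} v s 2 Y \<le> 0" unfolding wval2 using s2 by simp
  qed
  define X where "X = (\<lambda>k::nat. if k = 1 then X1 else if k = 2 then X2 else {})"
  have main: "Val v 1 X1 \<ge> 3/2 * W1 \<and> Val v 2 X2 \<ge> 3/2 * W2 \<and> X \<in> allocations {1,2} M"
  proof (cases "s 1 \<le> 1/3 \<and> s 2 \<ge> 2/3")
    case True
    then have X: "X1 = {}" "X2 = M" using assms(3) unfolding DivCho_output_def by auto
    have "W2 \<le> -2/3"
      unfolding W2_def
    proof (rule WMMS_le[OF fM])
      fix Y assume Y: "Y \<in> allocations {1::nat,2} M"
      have a: "Val v 2 (Y 1) \<le> 0" "Val v 2 (Y 2) \<le> 0"
        using val_nonpos[of M v 2, OF np2] alloc_parts[OF Y] by blast+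
      have sm: "Val v 2 (Y 1) + Val v 2 (Y 2) = -1" using alloc_sum[OF fM Y, of v 2] VM2 by simp
      have r: "s 2 / s 1 \<ge> 2" using True s1 by (simp add: field_simps)
      show "wval {1,2} v s 2 Y \<le> -2/3"
      proof (cases "Val v 2 (Y 2) \<le> -2/3")
        case True then show ?thesis unfolding wval2 using s2 by simp
      next
        case False
        then have "Val v 2 (Y 1) < -1/3" using sm by simp
        then have "Val v 2 (Y 1) * (s 2 / s 1) \<le> Val v 2 (Y 1) * 2"
          using r by (intro mult_left_mono_neg) auto
        then show ?thesis unfolding wval2 using \<open>Val v 2 (Y 1) < -1/3\<close> by simp
      qed
    qed
    moreover have "X \<in> allocations {1,2} M" unfolding X_def allocations_def X by auto
    ultimately show ?thesis using X W1np VM2 unfolding Val_def by simp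
  next
    case False
    then have sb: "s 1 > 1/3" using ssum by auto
    from False assms(3) obtain A where PA: "P_partition {1,2} M v s 2 A" and
      ch: "(X1 = A 1 \<and> X2 = A 2 \<and> Val v 1 (A 1) \<ge> Val v 1 (A 2)) \<or>
               (X1 = A 2 \<and> X2 = A 1 \<and> Val v 1 (A 2) \<ge> Val v 1 (A 1))"
      unfolding DivCho_output_def by auto
    have A: "A \<in> allocations {1,2} M" and WA: "W2 = wval {1,2} v s 2 A"
      using PA unfolding P_partition_def W2_def by auto
    have W1b: "W1 \<le> -1/3"
      unfolding W1_def
    proof (rule WMMS_le[OF fM])
      fix Y assume Y: "Y \<in> allocations {1::nat,2} M"
      have a: "Val v 1 (Y 1) \<le> 0" "Val v 1 (Y 2) \<le> 0"
        using val_nonpos[of M v 1, OF np1] alloc_parts[OF Y] by blast+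
      have sm: "Val v 1 (Y 1) + Val v 1 (Y 2) = -1" using alloc_sum[OF fM Y, of v 1] VM1 by simp
      have r: "s 1 / s 2 \<ge> 1/2" using sb ssum s2 by (simp add: field_simps)
      show "wval {1,2} v s 1 Y \<le> -1/3"
      proof (cases "Val v 1 (Y 1) \<le> -1/3")
        case True then show ?thesis unfolding wval2 using s1 by simp
      next
        case False
        then have "Val v 1 (Y 2) < -2/3" using sm by simp
        then have "Val v 1 (Y 2) * (s 1 / s 2) \<le> Val v 1 (Y 2) * (1/2)"
          using r by (intro mult_left_mono_neg) auto
        then show ?thesis unfolding wval2 using \<open>Val v 1 (Y 2) < -2/3\<close> by simp
      qed
    qed
    have smA: "Val v 1 (A 1) + Val v 1 (A 2) = -1" using alloc_sum[OF fM A, of v 1] VM1 by simp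
    have h1: "Val v 1 X1 \<ge> 3/2 * W1" using ch smA W1b by auto
    have a2: "Val v 2 (A 1) \<le> 0" "Val v 2 (A 2) \<le> 0"
      using val_nonpos[of M v 2, OF np2] alloc_parts[OF A] by blast+
    have r2: "3/2 * (s 2 / s 1) \<ge> 1" using assms(2) s1 by (simp add: field_simps)
    have "Val v 2 (A 1) \<ge> 3/2 * (Val v 2 (A 1) * (s 2 / s 1))"
    proof -
      have "Val v 2 (A 1) * (3/2 * (s 2 / s 1)) \<le> Val v 2 (A 1) * 1"
        using r2 a2 by (intro mult_left_mono_neg) auto
      then show ?thesis by (simp add: algebra_simps)
    qed
    moreover have "\<And>p q x::real. 3/2*p \<le> x \<Longrightarrow> 3/2*min p q \<le> x" by linarith
    ultimately have "Val v 2 (A 1) \<ge> 3/2 * W2" unfolding WA wval2 by blast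
    moreover have "Val v 2 (A 2) \<ge> 3/2 * W2" unfolding WA wval2 using a2 s2 by simp
    ultimately have h2: "Val v 2 X2 \<ge> 3/2 * W2" using ch by auto
    have "X \<in> allocations {1,2} M" using ch alloc_parts[OF A] unfolding X_def allocations_def by auto
    then show ?thesis using h1 h2 by simp
  qed
  define S where "S = {\<alpha>. 1 \<le> \<alpha> \<and> (\<exists>X\<in>allocations {1::nat,2} M. \<forall>i\<in>{1,2}. Val v i (X i) \<ge> \<alpha> * WMMS {1,2} M v s i)}"
  have "3/2 \<in> S" unfolding S_def using main unfolding X_def W1_def W2_def by (intro CollectI conjI bexI[of _ X]) (auto simp: X_def)
  then have r1: "1 \<le> OWMMS_ratio {1,2} M v s"
  proof -
    have ne: "S \<noteq> {}" using \<open>3/2 \<in> S\<close> by blast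
    have "1 \<le> Inf S" by (rule cInf_greatest[OF ne]) (simp add: S_def)
    then show ?thesis unfolding OWMMS_ratio_def S_def by simp
  qed
  have o1: "OWMMS {1,2} M v s 1 \<le> W1"
    unfolding OWMMS_def W1_def[symmetric] using mult_right_mono_neg[OF r1 W1np] by simp
  have o2: "OWMMS {1,2} M v s 2 \<le> W2"
    unfolding OWMMS_def W2_def[symmetric] using mult_right_mono_neg[OF r1 W2np] by simp
  show ?thesis using main o1 o2 unfolding W1_def W2_def by simp
qed

end
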